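(* Every Alster space is finitely powerfully Hurewicz, i.e., if $X$ is Alster then $X^k$ is Hurewicz for every positive integer $k$.
   Context: A topological space $X$ is Alster if every cover of $X$ by $G_\delta$ subsets of $X$ such that each compact subset of $X$ is included in some member of the cover has a countable subcover. A point-cofinite cover of a space is an infinite open cover such that each point of the space belongs to all but finitely many members of the cover. A space $X$ is Hurewicz if for each sequence $\{\mathcal{U}_n\}_{n<\omega}$ of open covers of $X$, none of which has a finite subcover, there are finite $\mathcal{F}_n\subseteq\mathcal{U}_n$ such that $\{\bigcup\mathcal{F}_n : n<\omega\}$ is a point-cofinite cover of $X$. Finite powers carry the product topology. No separation axioms are assumed. *)

theory Defs
  imports "HOL-Analysis.Analysis"
begin

definition Alster :: "'a topology \<Rightarrow> bool" where
  "Alster X \<longleftrightarrow>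
     (\<forall>\<G>. (\<forall>G\<in>\<G>. gdelta_in X G) \<and> topspace X \<subseteq> \<Union>\<G>
          \<and> (\<forall>K. compactin X K \<longrightarrow> (\<exists>G\<in>\<G>. K \<subseteq> G))
        \<longrightarrow> (\<exists>\<C>\<subseteq>\<G>. countable \<C> \<and> topspace X \<subseteq> \<Union>\<C>))"

definition open_cover :: "'a topology \<Rightarrow> 'a set set \<Rightarrow> bool" where
  "open_cover X \<U> \<longleftrightarrow> (\<forall>U\<in>\<U>. openin X U) \<and> topspace X \<subseteq> \<Union>\<U>"

definition point_cofinite_cover :: "'a topology \<Rightarrow> 'a set set \<Rightarrow> bool" where
  "point_cofinite_cover X \<U> \<longleftrightarrow>
     infinite \<U> \<and> open_cover X \<U> \<and> (\<forall>x\<in>topspace X. finite {U\<in>\<U>. x \<notin> U})"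

definition Hurewicz :: "'a topology \<Rightarrow> bool" where
  "Hurewicz X \<longleftrightarrow>
     (\<forall>\<U> :: nat \<Rightarrow> 'a set set.
        (\<forall>n. open_cover X (\<U> n) \<and> \<not> (\<exists>\<F>\<subseteq>\<U> n. finite \<F> \<and> topspace X \<subseteq> \<Union>\<F>))
        \<longrightarrow> (\<exists>\<F> :: nat \<Rightarrow> 'a set set. (\<forall>n. finite (\<F> n) \<and> \<F> n \<subseteq> \<U> n)
               \<and> point_cofinite_cover X (range (\<lambda>n. \<Union>(\<F> n)))))"

end

theory Submission
  imports Defs
begin

lemma csi:
  assumes "D \<subseteq> f ` A" "countable D"
  obtains A' where "countable A'" "A' \<subseteq> A" "D = f ` A'"
proof -
  have "\<exists>A'. countable A' \<and> A' \<subseteq> A \<and> D = f ` A'"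
    by (rule countable_subset_image[THEN iffD1, OF conjI[OF assms(2) assms(1)]])
  then show ?thesis using that by blast
qed

lemma alsterD:
  assumes "Alster X" "\<And>G. G \<in> \<G> \<Longrightarrow> gdelta_in X G" "topspace X \<subseteq> \<Union>\<G>"
    "\<And>K. compactin X K \<Longrightarrow> \<exists>G\<in>\<G>. K \<subseteq> G"
  obtains \<C> where "\<C> \<subseteq> \<G>" "countable \<C>" "topspace X \<subseteq> \<Union>\<C>"
proof -
  have "(\<forall>G\<in>\<G>. gdelta_in X G) \<and> topspace X \<subseteq> \<Union>\<G> \<and> (\<forall>K. compactin X K \<longrightarrow> (\<exists>G\<in>\<G>. K \<subseteq> G))"
    using assms(2-4) by blast
  then have "\<exists>\<C>\<subseteq>\<G>. countable \<C> \<and> topspace X \<subseteq> \<Union>\<C>"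
    using assms(1) unfolding Alster_def by (elim allE impE)
  then show ?thesis using that by blast
qed


lemma alster_compact:
  assumes "compactin X (topspace X)"
  shows "Alster X"
  unfolding Alster_def
proof (intro allI impI)
  fix \<G> :: "'a set set"
  assume H: "(\<forall>G\<in>\<G>. gdelta_in X G) \<and> topspace X \<subseteq> \<Union>\<G> \<and> (\<forall>K. compactin X K \<longrightarrow> (\<exists>G\<in>\<G>. K \<subseteq> G))"
  then obtain G where "G \<in> \<G>" "topspace X \<subseteq> G" using assms by blast
  then show "\<exists>\<C>\<subseteq>\<G>. countable \<C> \<and> topspace X \<subseteq> \<Union>\<C>"
    by (intro exI[of _ "{G}"]) auto
qed

lemma gdelta_preimage:
  assumes f: "continuous_map X Y f" and S: "gdelta_in Y S"
  shows "gdelta_in X {x\<in>topspace X. f x \<in> S}"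
proof -
  obtain C :: "nat \<Rightarrow> _" where C: "\<And>n. openin Y (C n)" "\<Inter>(range C) = S"
    using S unfolding gdelta_in_descending by blast
  have eq: "{x\<in>topspace X. f x \<in> S} = \<Inter>(range (\<lambda>n. {x\<in>topspace X. f x \<in> C n}))"
    using C(2) by auto
  show ?thesis unfolding eq
    by (rule gdelta_in_Inter) (auto intro!: open_imp_gdelta_in openin_continuous_map_preimage[OF f C(1)])
qed

lemma alster_image:
  assumes f: "continuous_map X Y f" and surj: "f ` topspace X = topspace Y" and A: "Alster X"
  shows "Alster Y"
  unfolding Alster_def
proof (intro allI impI)
  fix \<G> :: "'b set set"
  assume H: "(\<forall>G\<in>\<G>. gdelta_in Y G) \<and> topspace Y \<subseteq> \<Union>\<G> \<and> (\<forall>K. compactin Y K \<longrightarrow> (\<exists>G\<in>\<G>. K \<subseteq> G))"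
  define pre where "pre G = {x\<in>topspace X. f x \<in> G}" for G
  obtain D where D: "D \<subseteq> pre ` \<G>" "countable D" "topspace X \<subseteq> \<Union>D"
  proof (rule alsterD[OF A])
    fix G assume "G \<in> pre ` \<G>" then show "gdelta_in X G"
      using H gdelta_preimage[OF f] unfolding pre_def by auto
  next
    show "topspace X \<subseteq> \<Union> (pre ` \<G>)"
    proof
      fix x assume x: "x \<in> topspace X"
      then have "f x \<in> topspace Y" using f by (meson continuous_map_image_subset_topspace image_subset_iff)
      then obtain G where "G \<in> \<G>" "f x \<in> G" using H by blast
      then show "x \<in> \<Union> (pre ` \<G>)" using x unfolding pre_def by blast
    qed
  next
    fix K assume K: "compactin X K"
    then have "compactin Y (f ` K)" using image_compactin f by blast
    then obtain G where "G \<in> \<G>" "f ` K \<subseteq> G" using H by blast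
    then show "\<exists>G\<in>pre ` \<G>. K \<subseteq> G"
      using compactin_subset_topspace[OF K] unfolding pre_def by blast
  qed
  obtain \<C> where C: "countable \<C>" "\<C> \<subseteq> \<G>" "D = pre ` \<C>"
    by (rule csi[OF D(1,2)])
  show "\<exists>\<C>\<subseteq>\<G>. countable \<C> \<and> topspace Y \<subseteq> \<Union>\<C>"
  proof (intro exI conjI)
    show "topspace Y \<subseteq> \<Union>\<C>"
    proof
      fix y assume "y \<in> topspace Y"
      then obtain x where x: "x \<in> topspace X" "y = f x" using surj by blast
      then obtain G where "G \<in> \<C>" "x \<in> pre G" using D(3) C(3) by blast
      then show "y \<in> \<Union>\<C>" using x unfolding pre_def by blast
    qed
  qed (use C in auto)
qed

lemma gdelta_box:
  assumes G: "gdelta_in (prod_topology X Y) G" and K: "compactin X K" and L: "compactin Y L"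
    and sub: "K \<times> L \<subseteq> G"
  shows "\<exists>A B. gdelta_in X A \<and> gdelta_in Y B \<and> K \<subseteq> A \<and> L \<subseteq> B \<and> A \<times> B \<subseteq> G"
proof -
  obtain W :: "nat \<Rightarrow> _" where W: "\<And>n. openin (prod_topology X Y) (W n)" "\<Inter>(range W) = G"
    using G unfolding gdelta_in_descending by blast
  have "\<forall>n. \<exists>q. openin X (fst q) \<and> openin Y (snd q) \<and> K \<subseteq> fst q \<and> L \<subseteq> snd q \<and> fst q \<times> snd q \<subseteq> W n"
  proof
    fix n
    have "K \<times> L \<subseteq> W n" using sub W(2) by blast
    then obtain U V where "openin X U" "openin Y V" "K \<subseteq> U" "L \<subseteq> V" "U \<times> V \<subseteq> W n"
      by (rule Wallace_theorem_prod_topology[OF K L W(1)])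
    then show "\<exists>q. openin X (fst q) \<and> openin Y (snd q) \<and> K \<subseteq> fst q \<and> L \<subseteq> snd q \<and> fst q \<times> snd q \<subseteq> W n"
      by (intro exI[of _ "(U, V)"]) simp
  qed
  from choice[OF this] obtain Q where Q: "\<forall>n. openin X (fst (Q n)) \<and> openin Y (snd (Q n)) \<and> K \<subseteq> fst (Q n) \<and> L \<subseteq> snd (Q n) \<and> fst (Q n) \<times> snd (Q n) \<subseteq> W n"
    ..
  define U where "U n = fst (Q n)" for n
  define V where "V n = snd (Q n)" for n
  have UV: "openin X (U n) \<and> openin Y (V n) \<and> K \<subseteq> U n \<and> L \<subseteq> V n \<and> U n \<times> V n \<subseteq> W n" for n
    using Q unfolding U_def V_def by blast
  show ?thesis
  proof (intro exI conjI)
    show "gdelta_in X (\<Inter>(range U))"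
      by (rule gdelta_in_Inter) (auto intro!: open_imp_gdelta_in simp: UV)
    show "gdelta_in Y (\<Inter>(range V))"
      by (rule gdelta_in_Inter) (auto intro!: open_imp_gdelta_in simp: UV)
    show "K \<subseteq> \<Inter>(range U)" "L \<subseteq> \<Inter>(range V)" using UV by blast+
    show "\<Inter>(range U) \<times> \<Inter>(range V) \<subseteq> G"
    proof
      fix p assume "p \<in> \<Inter>(range U) \<times> \<Inter>(range V)"
      then have "\<forall>n. p \<in> U n \<times> V n" by auto
      then have "\<forall>n. p \<in> W n" using UV by blast
      then show "p \<in> G" using W(2) by blast
    qed
  qed
qed


lemma alster_prod:
  assumes AX: "Alster X" and AY: "Alster Y"
  shows "Alster (prod_topology X Y)"
  unfolding Alster_def
proof (intro allI impI)
  fix \<G> :: "('a \<times> 'b) set set"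
  assume H: "(\<forall>G\<in>\<G>. gdelta_in (prod_topology X Y) G) \<and> topspace (prod_topology X Y) \<subseteq> \<Union>\<G>
     \<and> (\<forall>K. compactin (prod_topology X Y) K \<longrightarrow> (\<exists>G\<in>\<G>. K \<subseteq> G))"
  have "\<forall>p. \<exists>t. compactin X (fst p) \<and> compactin Y (snd p) \<longrightarrow>
     fst t \<in> \<G> \<and> gdelta_in X (fst (snd t)) \<and> gdelta_in Y (snd (snd t)) \<and> fst p \<subseteq> fst (snd t)
     \<and> snd p \<subseteq> snd (snd t) \<and> fst (snd t) \<times> snd (snd t) \<subseteq> fst t"
  proof
    fix p :: "'a set \<times> 'b set"
    obtain K L where p: "p = (K, L)" by (cases p)
    show "\<exists>t. compactin X (fst p) \<and> compactin Y (snd p) \<longrightarrow>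
     fst t \<in> \<G> \<and> gdelta_in X (fst (snd t)) \<and> gdelta_in Y (snd (snd t)) \<and> fst p \<subseteq> fst (snd t)
     \<and> snd p \<subseteq> snd (snd t) \<and> fst (snd t) \<times> snd (snd t) \<subseteq> fst t"
    proof (cases "compactin X K \<and> compactin Y L")
      case True
      then have "compactin (prod_topology X Y) (K \<times> L)" by (simp add: compactin_Times)
      then obtain G where G: "G \<in> \<G>" "K \<times> L \<subseteq> G" using H by blast
      then obtain A B where "gdelta_in X A \<and> gdelta_in Y B \<and> K \<subseteq> A \<and> L \<subseteq> B \<and> A \<times> B \<subseteq> G"
        using gdelta_box[of X Y G K L] H True by blast
      then show ?thesis using G p by (intro exI[of _ "(G, A, B)"]) simp
    next
      case False
      have "\<not> (compactin X (fst p) \<and> compactin Y (snd p))" using False p by simp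
      then show ?thesis by (intro exI[of _ undefined] impI) (erule notE, assumption)
    qed
  qed
  from choice[OF this] obtain T where T: "\<forall>p. compactin X (fst p) \<and> compactin Y (snd p) \<longrightarrow>
     fst (T p) \<in> \<G> \<and> gdelta_in X (fst (snd (T p))) \<and> gdelta_in Y (snd (snd (T p))) \<and> fst p \<subseteq> fst (snd (T p))
     \<and> snd p \<subseteq> snd (snd (T p)) \<and> fst (snd (T p)) \<times> snd (snd (T p)) \<subseteq> fst (T p)"
    ..
  define GG where "GG K L = fst (T (K, L))" for K L
  define AA where "AA K L = fst (snd (T (K, L)))" for K L
  define BB where "BB K L = snd (snd (T (K, L)))" for K L
  have GAB: "GG K L \<in> \<G> \<and> gdelta_in X (AA K L) \<and> gdelta_in Y (BB K L) \<and> K \<subseteq> AA K L \<and> L \<subseteq> BB K L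
     \<and> AA K L \<times> BB K L \<subseteq> GG K L" if "compactin X K" "compactin Y L" for K L
    using T[rule_format, of "(K, L)"] that unfolding GG_def AA_def BB_def fst_conv snd_conv by blast
  have "\<forall>K. \<exists>\<L>. compactin X K \<longrightarrow> \<L> \<subseteq> {L. compactin Y L} \<and> countable \<L> \<and> topspace Y \<subseteq> \<Union>(BB K ` \<L>)"
  proof (intro allI impI)
    fix K
    show "\<exists>\<L>. compactin X K \<longrightarrow> \<L> \<subseteq> {L. compactin Y L} \<and> countable \<L> \<and> topspace Y \<subseteq> \<Union>(BB K ` \<L>)"
    proof (cases "compactin X K")
      case True
      obtain D where D: "D \<subseteq> BB K ` {L. compactin Y L}" "countable D" "topspace Y \<subseteq> \<Union>D"
      proof (rule alsterD[OF AY])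
        fix G assume "G \<in> BB K ` {L. compactin Y L}" then show "gdelta_in Y G"
          using GAB True by auto
      next
        show "topspace Y \<subseteq> \<Union> (BB K ` {L. compactin Y L})"
        proof
          fix y assume "y \<in> topspace Y"
          then have "compactin Y {y}" by simp
          then show "y \<in> \<Union> (BB K ` {L. compactin Y L})" using GAB[OF True] by blast
        qed
      next
        fix L assume "compactin Y L" then show "\<exists>G\<in>BB K ` {L. compactin Y L}. L \<subseteq> G"
          using GAB[OF True] by blast
      qed
      obtain \<L> where "countable \<L>" "\<L> \<subseteq> {L. compactin Y L}" "D = BB K ` \<L>"
        by (rule csi[OF D(1,2)])
      then show ?thesis using D by blast
    qed blast
  qed
  from choice[OF this] obtain LL where LL0: "\<forall>K. compactin X K \<longrightarrow> LL K \<subseteq> {L. compactin Y L} \<and> countable (LL K) \<and> topspace Y \<subseteq> \<Union>(BB K ` LL K)"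
    ..
  have LL: "LL K \<subseteq> {L. compactin Y L} \<and> countable (LL K) \<and> topspace Y \<subseteq> \<Union>(BB K ` LL K)" if "compactin X K" for K
    using LL0 that by blast
  define AK where "AK K = \<Inter>(insert (topspace X) (AA K ` LL K))" for K
  have AKg: "gdelta_in X (AK K)" if cK0: "compactin X K" for K
    unfolding AK_def
  proof (rule gdelta_in_Inter)
    show "countable (insert (topspace X) (AA K ` LL K))" using LL[OF cK0] by auto
    fix S assume S: "S \<in> insert (topspace X) (AA K ` LL K)"
    show "gdelta_in X S"
    proof (cases "S = topspace X")
      case False
      then obtain L where L: "L \<in> LL K" "S = AA K L" using S by blast
      then have cL: "compactin Y L" using LL[OF cK0] by blast
      show ?thesis using GAB[OF cK0 cL] L by simp
    qed simp
  qed auto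
  have KAK: "K \<subseteq> AK K" if cK0: "compactin X K" for K
    unfolding AK_def
  proof (intro subsetI InterI)
    fix x S assume x: "x \<in> K" and S: "S \<in> insert (topspace X) (AA K ` LL K)"
    show "x \<in> S"
    proof (cases "S = topspace X")
      case True
      then show ?thesis using x compactin_subset_topspace[OF cK0] by blast
    next
      case False
      then obtain L where L: "L \<in> LL K" "S = AA K L" using S by blast
      then have cL: "compactin Y L" using LL[OF cK0] by blast
      show ?thesis using GAB[OF cK0 cL] L x by blast
    qed
  qed
  obtain D where D: "D \<subseteq> AK ` {K. compactin X K}" "countable D" "topspace X \<subseteq> \<Union>D"
  proof (rule alsterD[OF AX])
    fix G assume "G \<in> AK ` {K. compactin X K}" then show "gdelta_in X G"
      using AKg by auto
  next
    show "topspace X \<subseteq> \<Union> (AK ` {K. compactin X K})"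
    proof
      fix x assume "x \<in> topspace X"
      then have "compactin X {x}" by simp
      then show "x \<in> \<Union> (AK ` {K. compactin X K})" using KAK by blast
    qed
  next
    fix K assume "compactin X K" then show "\<exists>G\<in>AK ` {K. compactin X K}. K \<subseteq> G"
      using KAK by blast
  qed
  obtain \<K> where K: "countable \<K>" "\<K> \<subseteq> {K. compactin X K}" "D = AK ` \<K>"
    by (rule csi[OF D(1,2)])
  show "\<exists>\<C>\<subseteq>\<G>. countable \<C> \<and> topspace (prod_topology X Y) \<subseteq> \<Union>\<C>"
  proof (intro exI conjI)
    show "(\<lambda>(K,L). GG K L) ` (SIGMA K:\<K>. LL K) \<subseteq> \<G>"
    proof
      fix G assume "G \<in> (\<lambda>(K,L). GG K L) ` (SIGMA K:\<K>. LL K)"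
      then obtain K L where KL: "K \<in> \<K>" "L \<in> LL K" "G = GG K L" by blast
      then have cK: "compactin X K" using K(2) by blast
      then have cL: "compactin Y L" using LL[OF cK] KL by blast
      show "G \<in> \<G>" using GAB[OF cK cL] KL by simp
    qed
    show "countable ((\<lambda>(K,L). GG K L) ` (SIGMA K:\<K>. LL K))"
      using K(1) LL K(2) by (intro countable_image countable_SIGMA) blast+
    show "topspace (prod_topology X Y) \<subseteq> \<Union> ((\<lambda>(K,L). GG K L) ` (SIGMA K:\<K>. LL K))"
    proof
      fix p assume p: "p \<in> topspace (prod_topology X Y)"
      obtain x y where xy: "p = (x,y)" "x \<in> topspace X" "y \<in> topspace Y" using p by auto
      then obtain K where "K \<in> \<K>" "x \<in> AK K" using D K by blast
      then have cK: "compactin X K" using K by blast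
      then obtain L where L: "L \<in> LL K" "y \<in> BB K L" using LL[OF cK] xy by blast
      then have "x \<in> AA K L" using \<open>x \<in> AK K\<close> unfolding AK_def by blast
      moreover have "compactin Y L" using LL[OF cK] L by blast
      ultimately have "p \<in> GG K L" using GAB[OF cK, of L] L xy by blast
      then show "p \<in> \<Union> ((\<lambda>(K,L). GG K L) ` (SIGMA K:\<K>. LL K))"
        using \<open>K \<in> \<K>\<close> L by blast
    qed
  qed
qed


lemma alster_power:
  fixes k :: nat
  assumes A: "Alster X"
  shows "Alster (product_topology (\<lambda>i. X) {..<k})"
proof (induction k)
  case 0
  have "topspace (product_topology (\<lambda>i. X) {..<0::nat}) = {\<lambda>i. undefined}"
    by (simp add: PiE_empty_domain)
  then show ?case by (intro alster_compact finite_imp_compactin) simp_all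
next
  case (Suc k)
  define f where "f = (\<lambda>p :: (nat \<Rightarrow> 'a) \<times> 'a. (fst p)(k := snd p))"
  have cont: "continuous_map (prod_topology (product_topology (\<lambda>i. X) {..<k}) X)
      (product_topology (\<lambda>i. X) {..<Suc k}) f"
    unfolding continuous_map_componentwise
  proof (intro conjI ballI)
    show "f ` topspace (prod_topology (product_topology (\<lambda>i. X) {..<k}) X) \<subseteq> extensional {..<Suc k}"
    proof
      fix h assume "h \<in> f ` topspace (prod_topology (product_topology (\<lambda>i. X) {..<k}) X)"
      then obtain g x where gx: "g \<in> (\<Pi>\<^sub>E i\<in>{..<k}. topspace X)" "h = g(k := x)"
        unfolding f_def by auto
      show "h \<in> extensional {..<Suc k}"
        unfolding extensional_def
      proof
        show "\<forall>j. j \<notin> {..<Suc k} \<longrightarrow> h j = undefined"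
        proof (intro allI impI)
          fix j assume j: "j \<notin> {..<Suc k}"
          then have "j \<noteq> k" "j \<notin> {..<k}" by auto
          then show "h j = undefined" using gx PiE_arb[OF gx(1)] by simp
        qed
      qed
    qed
  next
    fix i assume i: "i \<in> {..<Suc k}"
    show "continuous_map (prod_topology (product_topology (\<lambda>i. X) {..<k}) X) X (\<lambda>x. f x i)"
    proof (cases "i = k")
      case True
      then show ?thesis by (simp add: f_def continuous_map_snd)
    next
      case False
      then have "i \<in> {..<k}" using i by auto
      then have "continuous_map (prod_topology (product_topology (\<lambda>i. X) {..<k}) X) X ((\<lambda>x. x i) \<circ> fst)"
        by (intro continuous_map_compose[OF continuous_map_fst continuous_map_product_projection])
      then show ?thesis using False by (simp add: f_def o_def)
    qed
  qed
  have surj: "f ` topspace (prod_topology (product_topology (\<lambda>i. X) {..<k}) X)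
      = topspace (product_topology (\<lambda>i. X) {..<Suc k})"
  proof
    show "f ` topspace (prod_topology (product_topology (\<lambda>i. X) {..<k}) X)
      \<subseteq> topspace (product_topology (\<lambda>i. X) {..<Suc k})"
      by (rule continuous_map_image_subset_topspace[OF cont])
  next
    show "topspace (product_topology (\<lambda>i. X) {..<Suc k}) \<subseteq> f ` topspace (prod_topology (product_topology (\<lambda>i. X) {..<k}) X)"
    proof
      fix g assume g: "g \<in> topspace (product_topology (\<lambda>i. X) {..<Suc k})"
      have "(g(k := undefined), g k) \<in> topspace (prod_topology (product_topology (\<lambda>i. X) {..<k}) X)"
      proof -
        have g1: "\<forall>i\<in>{..<Suc k}. g i \<in> topspace X" "\<forall>i. i \<notin> {..<Suc k} \<longrightarrow> g i = undefined"
          using g by (simp_all add: PiE_iff extensional_def)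
        have "g(k := undefined) \<in> (\<Pi>\<^sub>E i\<in>{..<k}. topspace X)"
          unfolding PiE_iff extensional_def using g1 by simp
        moreover have "g k \<in> topspace X" using g1 by simp
        ultimately show ?thesis by simp
      qed
      moreover have "g = f (g(k := undefined), g k)" by (simp add: f_def)
      ultimately show "g \<in> f ` topspace (prod_topology (product_topology (\<lambda>i. X) {..<k}) X)" by blast
    qed
  qed
  show ?case by (rule alster_image[OF cont surj alster_prod[OF Suc.IH A]])
qed


lemma alster_hurewicz:
  assumes A: "Alster X"
  shows "Hurewicz X"
  unfolding Hurewicz_def
proof (intro allI impI)
  fix \<U> :: "nat \<Rightarrow> 'a set set"
  assume H: "\<forall>n. open_cover X (\<U> n) \<and> \<not> (\<exists>\<F>\<subseteq>\<U> n. finite \<F> \<and> topspace X \<subseteq> \<Union>\<F>)"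
  have "\<forall>p. \<exists>\<Phi>. compactin X (fst p) \<longrightarrow> finite \<Phi> \<and> \<Phi> \<subseteq> \<U> (snd p) \<and> fst p \<subseteq> \<Union>\<Phi>"
  proof
    fix p :: "'a set \<times> nat"
    obtain K n where p: "p = (K, n)" by (cases p)
    show "\<exists>\<Phi>. compactin X (fst p) \<longrightarrow> finite \<Phi> \<and> \<Phi> \<subseteq> \<U> (snd p) \<and> fst p \<subseteq> \<Union>\<Phi>"
    proof (cases "compactin X K")
      case True
      have "K \<subseteq> \<Union>(\<U> n)" using H compactin_subset_topspace[OF True] unfolding open_cover_def by blast
      then have "\<exists>\<Phi>. finite \<Phi> \<and> \<Phi> \<subseteq> \<U> n \<and> K \<subseteq> \<Union>\<Phi>"
        using compactinD[OF True, of "\<U> n"] H unfolding open_cover_def by blast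
      then show ?thesis using p by simp
    next
      case False
      then have "\<not> compactin X (fst p)" using p by simp
      then show ?thesis by (intro exI[of _ undefined] impI) (erule notE, assumption)
    qed
  qed
  from choice[OF this] obtain P where P: "\<forall>p. compactin X (fst p) \<longrightarrow> finite (P p) \<and> P p \<subseteq> \<U> (snd p) \<and> fst p \<subseteq> \<Union>(P p)"
    ..
  define Phi where "Phi K n = P (K, n)" for K n
  have Phi: "finite (Phi K n) \<and> Phi K n \<subseteq> \<U> n \<and> K \<subseteq> \<Union>(Phi K n)" if "compactin X K" for K n
    using P[rule_format, of "(K, n)"] that unfolding Phi_def fst_conv snd_conv by blast
  have opU: "\<And>n U. U \<in> \<U> n \<Longrightarrow> openin X U" using H unfolding open_cover_def by blast
  define GK where "GK K = \<Inter>(range (\<lambda>n. \<Union>(Phi K n)))" for K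
  have opPhi: "openin X (\<Union>(Phi K n))" if "compactin X K" for K n
    using Phi[OF that, of n] opU by (intro openin_Union) blast
  have GKg: "gdelta_in X (GK K)" if "compactin X K" for K
    unfolding GK_def
    by (rule gdelta_in_Inter) (auto intro!: open_imp_gdelta_in opPhi that)
  have KGK: "K \<subseteq> GK K" if "compactin X K" for K
    unfolding GK_def using Phi[OF that] by blast
  obtain D where D: "D \<subseteq> GK ` {K. compactin X K}" "countable D" "topspace X \<subseteq> \<Union>D"
  proof (rule alsterD[OF A])
    fix G assume "G \<in> GK ` {K. compactin X K}" then show "gdelta_in X G"
      using GKg by auto
  next
    show "topspace X \<subseteq> \<Union> (GK ` {K. compactin X K})"
    proof
      fix x assume "x \<in> topspace X"
      then have "compactin X {x}" by simp
      then show "x \<in> \<Union> (GK ` {K. compactin X K})" using KGK by blast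
    qed
  next
    fix K assume "compactin X K" then show "\<exists>G\<in>GK ` {K. compactin X K}. K \<subseteq> G"
      using KGK by blast
  qed
  obtain \<K> where K: "countable \<K>" "\<K> \<subseteq> {K. compactin X K}" "D = GK ` \<K>"
    by (rule csi[OF D(1,2)])
  have ne: "topspace X \<noteq> {}"
  proof
    assume "topspace X = {}"
    then have "\<exists>\<F>\<subseteq>\<U> 0. finite \<F> \<and> topspace X \<subseteq> \<Union>\<F>" by (intro exI[of _ "{}"]) auto
    then show False using H by blast
  qed
  have Kne: "\<K> \<noteq> {}"
  proof
    assume "\<K> = {}"
    then have "D = {}" using K(3) by simp
    then show False using D(3) ne by simp
  qed
  define e where "e = from_nat_into \<K>"
  have re: "range e = \<K>" unfolding e_def by (rule range_from_nat_into[OF Kne K(1)])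
  have ce: "compactin X (e m)" for m
  proof -
    have "e m \<in> \<K>" using re by blast
    then show ?thesis using K(2) by blast
  qed
  define F where "F n = (\<Union>m\<in>{..n}. Phi (e m) n)" for n
  have Ffin: "finite (F n) \<and> F n \<subseteq> \<U> n" for n
  proof
    show "finite (F n)" unfolding F_def
      by (intro finite_UN_I) (simp_all add: Phi[OF ce])
    show "F n \<subseteq> \<U> n" unfolding F_def using Phi[OF ce] by blast
  qed
  have cof: "\<exists>m. \<forall>n\<ge>m. x \<in> \<Union>(F n)" if x: "x \<in> topspace X" for x
  proof -
    have "topspace X \<subseteq> \<Union>(GK ` \<K>)" using D(3) K(3) by simp
    then have "x \<in> \<Union>(GK ` \<K>)" using x by (rule subsetD)
    then obtain K where "K \<in> \<K>" "x \<in> GK K" by blast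
    then obtain m where m: "e m = K" using re by blast
    have "x \<in> \<Union>(F n)" if "n \<ge> m" for n
    proof -
      have "x \<in> \<Union>(Phi (e m) n)" using \<open>x \<in> GK K\<close> m unfolding GK_def by blast
      moreover have "m \<in> {..n}" using that by simp
      ultimately show ?thesis unfolding F_def by blast
    qed
    then show ?thesis by blast
  qed
  define R where "R = range (\<lambda>n. \<Union>(F n))"
  have notcov: "\<not> topspace X \<subseteq> \<Union>(F n)" for n
  proof
    assume "topspace X \<subseteq> \<Union>(F n)"
    then have "\<exists>\<F>\<subseteq>\<U> n. finite \<F> \<and> topspace X \<subseteq> \<Union>\<F>" using Ffin[of n] by blast
    then show False using H by blast
  qed
  show "\<exists>\<F>. (\<forall>n. finite (\<F> n) \<and> \<F> n \<subseteq> \<U> n) \<and> point_cofinite_cover X (range (\<lambda>n. \<Union> (\<F> n)))"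
  proof (intro exI conjI allI)
    show "finite (F n)" "F n \<subseteq> \<U> n" for n using Ffin[of n] by simp_all
    show "point_cofinite_cover X (range (\<lambda>n. \<Union> (F n)))"
      unfolding point_cofinite_cover_def open_cover_def
    proof (intro conjI ballI)
      show "openin X U" if U: "U \<in> range (\<lambda>n. \<Union> (F n))" for U
      proof -
        obtain n where n: "U = \<Union>(F n)" using U by blast
        have "openin X (\<Union>(F n))" using Ffin[of n] opU by (intro openin_Union) blast
        then show ?thesis using n by simp
      qed
      show "topspace X \<subseteq> \<Union> (range (\<lambda>n. \<Union> (F n)))"
      proof
        fix x assume "x \<in> topspace X"
        then obtain m where m: "\<forall>n\<ge>m. x \<in> \<Union>(F n)" using cof by blast
        then have "x \<in> \<Union>(F m)" by simp
        then show "x \<in> \<Union> (range (\<lambda>n. \<Union> (F n)))" by blast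
      qed
      fix x assume x: "x \<in> topspace X"
      then obtain m where m: "\<forall>n\<ge>m. x \<in> \<Union>(F n)" using cof by blast
      have "{U \<in> range (\<lambda>n. \<Union> (F n)). x \<notin> U} \<subseteq> (\<lambda>n. \<Union> (F n)) ` {..<m}"
      proof
        fix U assume "U \<in> {U \<in> range (\<lambda>n. \<Union> (F n)). x \<notin> U}"
        then obtain n where n: "U = \<Union>(F n)" "x \<notin> U" by blast
        then have "n < m" using m by (meson not_le)
        then show "U \<in> (\<lambda>n. \<Union> (F n)) ` {..<m}" using n by blast
      qed
      then show "finite {U \<in> range (\<lambda>n. \<Union> (F n)). x \<notin> U}"
        by (rule finite_subset) simp
    next
      show "infinite (range (\<lambda>n. \<Union> (F n)))"
      proof
        assume fin: "finite (range (\<lambda>n. \<Union> (F n)))"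
        have "\<forall>V\<in>range (\<lambda>n. \<Union> (F n)). \<exists>m. \<exists>x\<in>topspace X. x \<notin> V \<and> (\<forall>n\<ge>m. x \<in> \<Union>(F n))"
        proof
          fix V assume "V \<in> range (\<lambda>n. \<Union> (F n))"
          then obtain n where n: "V = \<Union>(F n)" by blast
          have "\<not> topspace X \<subseteq> V" unfolding n by (rule notcov)
          then obtain x where x: "x \<in> topspace X" "x \<notin> V" by blast
          obtain m where m: "\<forall>n\<ge>m. x \<in> \<Union>(F n)" using cof[OF x(1)] by blast
          show "\<exists>m. \<exists>x\<in>topspace X. x \<notin> V \<and> (\<forall>n\<ge>m. x \<in> \<Union>(F n))"
            by (intro exI[of _ m] bexI[of _ x] conjI x(2) m x(1))
        qed
        from bchoice[OF this] obtain M where M0: "\<forall>V\<in>range (\<lambda>n. \<Union> (F n)). \<exists>x\<in>topspace X. x \<notin> V \<and> (\<forall>n\<ge>M V. x \<in> \<Union>(F n))"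
          ..
        have M: "\<exists>x\<in>topspace X. x \<notin> V \<and> (\<forall>n\<ge>M V. x \<in> \<Union>(F n))" if "V \<in> range (\<lambda>n. \<Union> (F n))" for V
          using M0 that by (rule bspec)
        define N where "N = Max (M ` range (\<lambda>n. \<Union> (F n)))"
        have VN: "\<Union>(F N) \<in> range (\<lambda>n. \<Union> (F n))" by blast
        have "M (\<Union>(F N)) \<le> N" unfolding N_def
          by (rule Max_ge) (use fin VN in simp_all)
        moreover obtain x where x: "x \<in> topspace X" "x \<notin> \<Union>(F N)" "\<forall>n\<ge>M (\<Union>(F N)). x \<in> \<Union>(F n)"
          using M[OF VN] by blast
        ultimately have "x \<in> \<Union>(F N)" by (intro x(3)[rule_format])
        then show False using x(2) by contradiction
      qed
    qed
  qed
qed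

theorem corollary2p4:
  fixes X :: "'a topology"
  assumes "Alster X"
  shows "\<forall>k::nat. k > 0 \<longrightarrow> Hurewicz (product_topology (\<lambda>i. X) {..<k})"
  using alster_hurewicz alster_power assms by blast

end
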